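(* For any function $f^*:\mathbb R\rightarrow\mathbb R$, any (nonempty) finite set $\mathcal X\subset\mathbb R$, and any compact interval $\mathcal{I} \subset\mathbb R$ containing $\mathcal X$, there exists a $\textsc{ReLU}$ network $f:\mathbb R\rightarrow\mathbb R$ of width $2$ such that $f(x)=f^*(x)$ for all $x\in\mathcal X$ and $f(\mathcal I)\subset\big[\min f^*(\mathcal X),\max f^*(\mathcal X)\big]$.
   Context: A $\textsc{ReLU}$ network is $t_L\circ\sigma_{L-1}\circ\cdots\circ\sigma_1\circ t_1$ with affine maps $t_\ell:\mathbb R^{d_{\ell-1}}\to\mathbb R^{d_\ell}$ and $\sigma_\ell$ the coordinatewise $\textsc{ReLU}$ $x\mapsto\max\{x,0\}$; its width is $\max\{d_1,\dots,d_{L-1}\}$ and its depth is arbitrary. *)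

theory Defs
  imports "HOL-Analysis.Analysis"
begin

text \<open>Vectors in R^d are represented as functions nat => real, only indices < d matter.\<close>

record layer =
  ldin :: nat
  ldout :: nat
  lW :: "nat \<Rightarrow> nat \<Rightarrow> real"
  lb :: "nat \<Rightarrow> real"

definition affine_apply :: "layer \<Rightarrow> (nat \<Rightarrow> real) \<Rightarrow> (nat \<Rightarrow> real)" where
  "affine_apply t x = (\<lambda>i. if i < ldout t then (\<Sum>j<ldin t. lW t i j * x j) + lb t i else 0)"

definition relu_vec :: "(nat \<Rightarrow> real) \<Rightarrow> (nat \<Rightarrow> real)" where
  "relu_vec x = (\<lambda>i. max (x i) 0)"

fun net_eval :: "layer list \<Rightarrow> (nat \<Rightarrow> real) \<Rightarrow> (nat \<Rightarrow> real)" where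
  "net_eval [] x = x"
| "net_eval [t] x = affine_apply t x"
| "net_eval (t # ts) x = net_eval ts (relu_vec (affine_apply t x))"

definition valid_net :: "nat \<Rightarrow> nat \<Rightarrow> layer list \<Rightarrow> bool" where
  "valid_net d0 dL ts \<longleftrightarrow> ts \<noteq> [] \<and> ldin (hd ts) = d0 \<and> ldout (last ts) = dL \<and>
     (\<forall>k. Suc k < length ts \<longrightarrow> ldout (ts ! k) = ldin (ts ! Suc k))"

definition net_width :: "layer list \<Rightarrow> nat" where
  "net_width ts = Max (insert 0 {ldout (ts ! k) | k. Suc k < length ts})"

definition net_fun :: "layer list \<Rightarrow> real \<Rightarrow> real" where
  "net_fun ts x = net_eval ts (\<lambda>i. if i = 0 then x else 0) 0"

definition relu_net_of_width :: "nat \<Rightarrow> (real \<Rightarrow> real) \<Rightarrow> bool" where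
  "relu_net_of_width w f \<longleftrightarrow> (\<exists>ts. valid_net 1 1 ts \<and> net_width ts = w \<and> f = net_fun ts)"

end

theory Submission
  imports Defs
begin

definition ein :: "real \<Rightarrow> nat \<Rightarrow> real" where
  "ein x = (\<lambda>i. if i = 0 then x else 0)"

definition good :: "layer list \<Rightarrow> bool" where
  "good ts \<longleftrightarrow> ts \<noteq> [] \<and> ldin (hd ts) = 1 \<and> (\<forall>t\<in>set ts. ldout t = 2) \<and> (\<forall>t\<in>set (tl ts). ldin t = 2)"

lemma sum2: "(\<Sum>j<(2::nat). f j) = f 0 + (f 1 :: real)"
  by (simp add: numeral_2_eq_2)

lemma net_eval_Cons: "ts \<noteq> [] \<Longrightarrow> net_eval (t # ts) x = net_eval ts (relu_vec (affine_apply t x))"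
  by (cases ts) auto

lemma net_eval_append: "ts \<noteq> [] \<Longrightarrow> rs \<noteq> [] \<Longrightarrow> net_eval (ts @ rs) x = net_eval rs (relu_vec (net_eval ts x))"
proof (induction ts arbitrary: x)
  case Nil then show ?case by simp
next
  case (Cons t ts)
  show ?case
  proof (cases "ts = []")
    case True then show ?thesis using Cons by (simp add: net_eval_Cons)
  next
    case False then show ?thesis using Cons by (simp add: net_eval_Cons)
  qed
qed

lemma prefix:
  fixes g :: "real \<Rightarrow> real"
  assumes "finite A"
  shows "\<forall>c. (\<forall>z\<in>A. z \<le> c) \<longrightarrow> (\<exists>ts. good ts \<and>
     (\<forall>x. relu_vec (net_eval ts (ein x)) 0 = max (x - c) 0) \<and>
     (\<forall>z\<in>A. relu_vec (net_eval ts (ein z)) 1 = max (g z) 0))"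
  using assms
proof (induction A rule: finite_linorder_max_induct)
  case empty
  show ?case
  proof (intro allI impI)
    fix c :: real
    define t where "t = \<lparr>ldin = 1, ldout = 2, lW = (\<lambda>i j. if i = 0 then 1 else 0),
       lb = (\<lambda>i. if i = 0 then - c else 0)\<rparr>"
    have "good [t]" by (simp add: good_def t_def)
    moreover have "\<forall>x. relu_vec (net_eval [t] (ein x)) 0 = max (x - c) 0"
      by (simp add: t_def relu_vec_def affine_apply_def ein_def)
    ultimately show "\<exists>ts. good ts \<and>
     (\<forall>x. relu_vec (net_eval ts (ein x)) 0 = max (x - c) 0) \<and>
     (\<forall>z\<in>{}. relu_vec (net_eval ts (ein z)) 1 = max (g z) 0)" by blast
  qed
next
  case (insert b A)
  show ?case
  proof (intro allI impI)
    fix c :: real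
    assume hc: "\<forall>z\<in>insert b A. z \<le> c"
    define c' where "c' = (if A = {} then b - 1 else Max A)"
    have c'b: "c' < b" using insert.hyps by (auto simp: c'_def)
    have c'A: "\<forall>z\<in>A. z \<le> c'" using insert.hyps by (auto simp: c'_def)
    have c'c: "c' \<le> c" using c'b hc by auto
    obtain ts where g: "good ts" and s0: "\<forall>x. relu_vec (net_eval ts (ein x)) 0 = max (x - c') 0"
      and s1: "\<forall>z\<in>A. relu_vec (net_eval ts (ein z)) 1 = max (g z) 0"
      using insert.IH c'A by blast
    define vb where "vb = relu_vec (net_eval ts (ein b)) 1"
    define gam where "gam = (max (g b) 0 - vb) / (b - c')"
    define t where "t = \<lparr>ldin = 2, ldout = 2, lW = (\<lambda>i j. if i = 0 then (if j = 0 then 1 else 0)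
        else (if j = 0 then gam else 1)),
       lb = (\<lambda>i. if i = 0 then - (c - c') else 0)\<rparr>"
    have ev: "relu_vec (net_eval (ts @ [t]) x) = relu_vec (affine_apply t (relu_vec (net_eval ts x)))" for x
      using g by (simp add: net_eval_append good_def)
    have "good (ts @ [t])" using g by (cases ts) (auto simp: good_def t_def)
    moreover have "\<forall>x. relu_vec (net_eval (ts @ [t]) (ein x)) 0 = max (x - c) 0"
    proof
      fix x
      have "relu_vec (net_eval (ts @ [t]) (ein x)) 0 = max (max (x - c') 0 - (c - c')) 0"
        unfolding ev using s0 by (simp add: affine_apply_def t_def sum2 relu_vec_def)
      also have "\<dots> = max (x - c) 0" using c'c by auto
      finally show "relu_vec (net_eval (ts @ [t]) (ein x)) 0 = max (x - c) 0" .
    qed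
    moreover have "\<forall>z\<in>insert b A. relu_vec (net_eval (ts @ [t]) (ein z)) 1 = max (g z) 0"
    proof
      fix z assume z: "z \<in> insert b A"
      have e: "relu_vec (net_eval (ts @ [t]) (ein z)) 1 =
         max (gam * max (z - c') 0 + relu_vec (net_eval ts (ein z)) 1) 0"
        unfolding ev using s0 by (simp add: affine_apply_def t_def sum2 relu_vec_def)
      show "relu_vec (net_eval (ts @ [t]) (ein z)) 1 = max (g z) 0"
      proof (cases "z = b")
        case True
        have "gam * max (z - c') 0 + relu_vec (net_eval ts (ein z)) 1 = max (g b) 0"
          using True c'b by (simp add: gam_def vb_def)
        then show ?thesis using e True by simp
      next
        case False
        then have "z \<in> A" using z by auto
        then have "max (z - c') 0 = 0" using c'A by auto
        then show ?thesis using e s1 \<open>z \<in> A\<close> by simp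
      qed
    qed
    ultimately show "\<exists>ts. good ts \<and>
     (\<forall>x. relu_vec (net_eval ts (ein x)) 0 = max (x - c) 0) \<and>
     (\<forall>z\<in>insert b A. relu_vec (net_eval ts (ein z)) 1 = max (g z) 0)" by blast
  qed
qed

theorem lemma5:
  fixes fstar :: "real \<Rightarrow> real" and X :: "real set" and a b :: real
  assumes "finite X" and "X \<noteq> {}" and "X \<subseteq> {a..b}"
  shows "\<exists>f. relu_net_of_width 2 f \<and> (\<forall>x\<in>X. f x = fstar x) \<and>
           f ` {a..b} \<subseteq> {Min (fstar ` X) .. Max (fstar ` X)}"
proof -
  define m where "m = Min (fstar ` X)"
  define M where "M = Max (fstar ` X)"
  have mz: "m \<le> fstar z" "fstar z \<le> M" if "z \<in> X" for z
    using that assms by (auto simp: m_def M_def)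
  obtain ts where g: "good ts"
    and s1: "\<forall>z\<in>X. relu_vec (net_eval ts (ein z)) 1 = max (fstar z - m) 0"
    using prefix[OF assms(1), of "\<lambda>z. fstar z - m"] assms(3) by fastforce
  define tc where "tc = \<lparr>ldin = 2, ldout = 2, lW = (\<lambda>i j. if i = 1 \<and> j = 1 then -1 else 0),
       lb = (\<lambda>i. if i = 1 then M - m else 0)\<rparr>"
  define tf where "tf = \<lparr>ldin = 2, ldout = 1, lW = (\<lambda>i j. if j = 1 then -1 else 0),
       lb = (\<lambda>i. M)\<rparr>"
  define ns where "ns = ts @ [tc, tf]"
  have nn: "relu_vec v 1 \<ge> 0" for v by (simp add: relu_vec_def)
  have fval: "net_fun ns x = M - max ((M - m) - relu_vec (net_eval ts (ein x)) 1) 0" for x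
    using g unfolding net_fun_def ns_def ein_def[symmetric]
    by (simp add: net_eval_append good_def affine_apply_def tc_def tf_def sum2 relu_vec_def)
  have valid: "valid_net 1 1 ns"
    unfolding valid_net_def
  proof (intro conjI allI impI)
    show "ns \<noteq> []" by (simp add: ns_def)
    show "ldin (hd ns) = 1" using g by (cases ts) (auto simp: ns_def good_def)
    show "ldout (last ns) = 1" by (simp add: ns_def tf_def)
  next
    fix k assume k: "Suc k < length ns"
    have "ldout (ns ! k) = 2"
    proof (cases "k < length ts")
      case True then show ?thesis using g by (simp add: ns_def nth_append good_def)
    next
      case False then have "k = length ts" using k by (simp add: ns_def)
      then show ?thesis by (simp add: ns_def tc_def)
    qed
    moreover have "ldin (ns ! Suc k) = 2"
    proof -
      have "ns ! Suc k = tl ns ! k" using k by (cases ns) auto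
      moreover have "tl ns ! k \<in> set (tl ns)" using k by (cases ns) auto
      moreover have "\<forall>t\<in>set (tl ns). ldin t = 2"
        using g by (cases ts) (auto simp: ns_def good_def tc_def tf_def)
      ultimately show ?thesis by simp
    qed
    ultimately show "ldout (ns ! k) = ldin (ns ! Suc k)" by simp
  qed
  have "{ldout (ns ! k) | k. Suc k < length ns} = {2}"
  proof
    show "{ldout (ns ! k) | k. Suc k < length ns} \<subseteq> {2}"
    proof
      fix y assume "y \<in> {ldout (ns ! k) | k. Suc k < length ns}"
      then obtain k where k: "Suc k < length ns" and y: "y = ldout (ns ! k)" by blast
      show "y \<in> {2}"
      proof (cases "k < length ts")
        case True then show ?thesis using g y by (simp add: ns_def nth_append good_def)
      next
        case False then have "k = length ts" using k by (simp add: ns_def)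
        then show ?thesis using y by (simp add: ns_def tc_def)
      qed
    qed
    have "ldout (ns ! length ts) = 2" "Suc (length ts) < length ns"
      by (simp_all add: ns_def tc_def nth_append)
    then show "{2} \<subseteq> {ldout (ns ! k) | k. Suc k < length ns}" by force
  qed
  then have w: "net_width ns = 2" by (simp add: net_width_def)
  have "relu_net_of_width 2 (net_fun ns)"
    unfolding relu_net_of_width_def using valid w by blast
  moreover have "\<forall>x\<in>X. net_fun ns x = fstar x"
    using s1 mz by (auto simp: fval)
  moreover have "net_fun ns ` {a..b} \<subseteq> {Min (fstar ` X) .. Max (fstar ` X)}"
  proof -
    have "m \<le> M" using mz assms(2) by force
    then show ?thesis unfolding m_def[symmetric] M_def[symmetric]
      using nn by (auto simp: fval) (smt (verit) nn)
  qed
  ultimately show ?thesis by blast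
qed

end
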